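(* Let $n\ge2$, let $A=[a_{kl}]$ be a real $n\times n$ matrix with zero diagonal and $f(\sigma)=\sum_{p=1}^{n-1}\sum_{q=p+1}^n a_{\sigma(p)\sigma(q)}$ its LOP objective function on $\Sigma_n$. For $i\in\{1,\dots,n-1\}$ and $j\in\{1,\dots,n\}$ let $\mu_{ij}=\frac{1}{(n-1)!}\sum_{\sigma:\sigma(i)=j}f(\sigma)$ and $\mu_{i+1\,j}=\frac{1}{(n-1)!}\sum_{\sigma:\sigma(i+1)=j}f(\sigma)$. Then $$\mu_{i+1\,j}-\mu_{ij}=\frac{1}{n-1}\sum_{k\ne j}\bigl(a_{kj}-a_{jk}\bigr).$$
   Context: $\Sigma_n$ is the symmetric group on $\{1,\dots,n\}$; $\sigma(p)$ is the row/column index placed in position $p$. *)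

theory Defs
  imports "HOL-Combinatorics.Permutations" Complex_Main
begin

text \<open>Matrices are n x n real matrices indexed by 1..n, represented as functions
  nat \<Rightarrow> nat \<Rightarrow> real (entries outside 1..n are irrelevant).\<close>

definition lop_obj :: "nat \<Rightarrow> (nat \<Rightarrow> nat \<Rightarrow> real) \<Rightarrow> (nat \<Rightarrow> nat) \<Rightarrow> real" where
  "lop_obj n A \<sigma> = (\<Sum>p = 1..n-1. \<Sum>q = p+1..n. A (\<sigma> p) (\<sigma> q))"

definition mu :: "nat \<Rightarrow> (nat \<Rightarrow> nat \<Rightarrow> real) \<Rightarrow> nat \<Rightarrow> nat \<Rightarrow> real" where
  "mu n A i j = (1 / fact (n - 1)) *
     (\<Sum>\<sigma> \<in> {\<sigma>. \<sigma> permutes {1..n} \<and> \<sigma> i = j}. lop_obj n A \<sigma>)"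

end

theory Submission
  imports Defs
begin

definition pairsP :: "nat \<Rightarrow> (nat \<times> nat) set" where
  "pairsP n = {(p,q). 1 \<le> p \<and> p < q \<and> q \<le> n}"

lemma finite_pairsP: "finite (pairsP n)"
  by (rule finite_subset[of _ "{0..n} \<times> {0..n}"]) (auto simp: pairsP_def)

lemma lop_pairs: "lop_obj n A g = (\<Sum>(p,q)\<in>pairsP n. A (g p) (g q))"
proof -
  have "lop_obj n A g = (\<Sum>(p,q)\<in>Sigma {1..n-1} (\<lambda>p. {p+1..n}). A (g p) (g q))"
    unfolding lop_obj_def by (rule sum.Sigma) auto
  also have "Sigma {1..n-1} (\<lambda>p. {p+1..n}) = pairsP n"
    by (auto simp: pairsP_def)
  finally show ?thesis .
qed

lemma lop_swap:
  assumes "1 \<le> i" "i + 1 \<le> n"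
  shows "lop_obj n A (\<sigma> \<circ> Transposition.transpose i (i+1))
    = lop_obj n A \<sigma> + A (\<sigma> (i+1)) (\<sigma> i) - A (\<sigma> i) (\<sigma> (i+1))"
proof -
  let ?t = "Transposition.transpose i (i+1)"
  let ?P = "pairsP n - {(i,i+1)}"
  define G where "G = (\<lambda>(p,q). A (\<sigma> p) (\<sigma> q))"
  define h where "h = (\<lambda>(p::nat,q::nat). (?t p, ?t q))"
  have ins: "pairsP n = insert (i,i+1) ?P" using assms by (auto simp: pairsP_def)
  have fin: "finite ?P" using finite_pairsP by auto
  have hh: "h (h x) = x" for x by (auto simp: h_def split: prod.splits)
  have hP: "h x \<in> ?P" if "x \<in> ?P" for x
    using that assms by (auto simp: h_def pairsP_def transpose_def split: prod.splits if_splits)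
  have re: "sum (G \<circ> h) ?P = sum G ?P"
    apply (rule sum.reindex_bij_witness[where i=h and j=h])
    apply (rule hh) apply (erule hP) apply (rule hh) apply (erule hP) by simp
  have "lop_obj n A (\<sigma> \<circ> ?t) = sum (G \<circ> h) (pairsP n)"
    by (simp add: lop_pairs G_def h_def case_prod_unfold)
  also have "\<dots> = (G \<circ> h) (i,i+1) + sum (G \<circ> h) ?P"
    by (subst ins, subst sum.insert) (use fin in auto)
  also have "\<dots> = A (\<sigma> (i+1)) (\<sigma> i) + sum G ?P"
    by (subst re) (simp add: G_def h_def)
  also have "lop_obj n A \<sigma> = G (i,i+1) + sum G ?P"
    by (simp add: lop_pairs G_def case_prod_unfold, subst ins, subst sum.insert) (use fin in auto)
  ultimately show ?thesis by (simp add: G_def)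
qed


lemma card_fix1:
  assumes fin: "finite S" and a: "a \<in> S" and b: "b \<in> S"
  shows "card {p. p permutes S \<and> p a = b \<and> P p}
       = card {q. q permutes S - {a} \<and> P (Transposition.transpose a b \<circ> q)}"
proof -
  let ?t = "Transposition.transpose a b"
  have eq: "{p. p permutes S \<and> p a = b \<and> P p}
       = (\<lambda>q. ?t \<circ> q) ` {q. q permutes S - {a} \<and> P (?t \<circ> q)}"
  proof (rule set_eqI, rule iffI)
    fix p assume "p \<in> {p. p permutes S \<and> p a = b \<and> P p}"
    hence p: "p permutes S" "p a = b" "P p" by auto
    have "?t \<circ> p permutes S" using p(1) a b by (simp add: permutes_compose permutes_swap_id)
    hence "?t \<circ> p permutes S - {a}"
      by (rule permutes_superset) (use p(2) in auto)
    moreover have "p = ?t \<circ> (?t \<circ> p)" by (simp add: fun_eq_iff)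
    ultimately show "p \<in> (\<lambda>q. ?t \<circ> q) ` {q. q permutes S - {a} \<and> P (?t \<circ> q)}"
      using p(3) by (metis (mono_tags, lifting) image_eqI mem_Collect_eq)
  next
    fix p assume "p \<in> (\<lambda>q. ?t \<circ> q) ` {q. q permutes S - {a} \<and> P (?t \<circ> q)}"
    then obtain q where q: "q permutes S - {a}" "P (?t \<circ> q)" "p = ?t \<circ> q" by auto
    have "q permutes S" using q(1) permutes_subset by blast
    hence "?t \<circ> q permutes S" using a b by (simp add: permutes_compose permutes_swap_id)
    moreover have "q a = a" using q(1) permutes_not_in by fastforce
    ultimately show "p \<in> {p. p permutes S \<and> p a = b \<and> P p}" using q by auto
  qed
  have inj: "inj_on (\<lambda>q. ?t \<circ> q) X" for X
    by (rule inj_onI) (metis (no_types) comp_assoc transpose_comp_involutory id_comp)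
  show ?thesis by (subst eq, rule card_image[OF inj])
qed

lemma card_fix2:
  assumes fin: "finite S" and "a \<in> S" "b \<in> S" "c \<in> S" "d \<in> S" "a \<noteq> c" "b \<noteq> d"
  shows "card {p. p permutes S \<and> p a = b \<and> p c = d} = fact (card S - 2)"
proof -
  let ?t = "Transposition.transpose a b"
  have "card {p. p permutes S \<and> p a = b \<and> p c = d}
      = card {q. q permutes S - {a} \<and> (?t \<circ> q) c = d}"
    using card_fix1[OF assms(1-3), of "\<lambda>p. p c = d"] by simp
  also have "{q. q permutes S - {a} \<and> (?t \<circ> q) c = d} = {q. q permutes S - {a} \<and> q c = ?t d \<and> True}"
    by (rule Collect_cong) (metis comp_apply transpose_involutory)
  also have "card \<dots> = card {r. r permutes S - {a} - {c} \<and> True}"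
    by (rule card_fix1[where P="\<lambda>_. True"]) (use assms in \<open>auto simp: transpose_eq_iff transpose_def\<close>)
  also have "\<dots> = fact (card S - 2)"
  proof -
    have "card (S - {a} - {c}) = card S - 2" using assms by (simp add: card_Diff_singleton)
    thus ?thesis using card_permutations[of "S - {a} - {c}"] fin by simp
  qed
  finally show ?thesis .
qed


theorem proposition9:
  fixes n :: nat and A :: "nat \<Rightarrow> nat \<Rightarrow> real" and i j :: nat
  assumes "n \<ge> 2"
    and "\<And>k. k \<in> {1..n} \<Longrightarrow> A k k = 0"
    and "i \<in> {1..n-1}" and "j \<in> {1..n}"
  shows "mu n A (i+1) j - mu n A i j
           = (1 / (real n - 1)) * (\<Sum>k \<in> {1..n} - {j}. A k j - A j k)"
proof -
  let ?S = "{1..n}"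
  let ?t = "Transposition.transpose i (i+1)"
  define Si where "Si = {\<sigma>. \<sigma> permutes ?S \<and> \<sigma> i = j}"
  define Si1 where "Si1 = {\<sigma>. \<sigma> permutes ?S \<and> \<sigma> (i+1) = j}"
  define F where "F = (\<lambda>m. A m j - A j m)"
  have i1: "1 \<le> i" "i + 1 \<le> n" using assms(3) by auto
  have iS: "i \<in> ?S" "i+1 \<in> ?S" using i1 by auto
  have tS: "?t permutes ?S" using iS by (simp add: permutes_swap_id)
  have pc: "\<And>\<sigma>. \<sigma> permutes ?S \<Longrightarrow> \<sigma> \<circ> ?t permutes ?S" using tS permutes_compose by blast
  have finSi: "finite Si" unfolding Si_def
    by (rule finite_subset[OF _ finite_permutations[of ?S]]) auto
  have s1: "sum (lop_obj n A) Si1 = sum (\<lambda>\<sigma>. lop_obj n A (\<sigma> \<circ> ?t)) Si"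
    by (rule sum.reindex_bij_witness[where i="\<lambda>\<sigma>. \<sigma> \<circ> ?t" and j="\<lambda>\<sigma>. \<sigma> \<circ> ?t"])
      (use pc in \<open>auto simp: Si_def Si1_def comp_assoc\<close>)
  have s2: "sum (\<lambda>\<sigma>. lop_obj n A (\<sigma> \<circ> ?t)) Si - sum (lop_obj n A) Si
      = sum (\<lambda>\<sigma>. F (\<sigma> (i+1))) Si"
    unfolding sum_subtractf[symmetric]
  proof (rule sum.cong[OF refl])
    fix \<sigma> assume "\<sigma> \<in> Si"
    hence "\<sigma> i = j" by (simp add: Si_def)
    thus "lop_obj n A (\<sigma> \<circ> ?t) - lop_obj n A \<sigma> = F (\<sigma> (i+1))"
      using lop_swap[OF i1, of A \<sigma>] by (simp add: F_def)
  qed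
  have img: "(\<lambda>\<sigma>. \<sigma> (i+1)) ` Si \<subseteq> ?S - {j}"
  proof
    fix m assume "m \<in> (\<lambda>\<sigma>. \<sigma> (i+1)) ` Si"
    then obtain \<sigma> where s: "\<sigma> permutes ?S" "\<sigma> i = j" "m = \<sigma> (i+1)" by (auto simp: Si_def)
    have "m \<in> ?S" using s iS permutes_in_image by metis
    moreover have "m \<noteq> j" using s permutes_inj[OF s(1)] by (metis inj_eq n_not_Suc_n Suc_eq_plus1)
    ultimately show "m \<in> ?S - {j}" by simp
  qed
  have s3: "sum (\<lambda>\<sigma>. F (\<sigma> (i+1))) Si = (\<Sum>m\<in>?S - {j}. fact (n - 2) * F m)"
  proof -
    have "sum (\<lambda>\<sigma>. F (\<sigma> (i+1))) Si
        = (\<Sum>m\<in>?S - {j}. sum (\<lambda>\<sigma>. F (\<sigma> (i+1))) {\<sigma>. \<sigma> \<in> Si \<and> \<sigma> (i+1) = m})"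
      by (rule sum.group[symmetric]) (use finSi img in auto)
    also have "\<dots> = (\<Sum>m\<in>?S - {j}. fact (n - 2) * F m)"
    proof (rule sum.cong[OF refl])
      fix m assume m: "m \<in> ?S - {j}"
      have "sum (\<lambda>\<sigma>. F (\<sigma> (i+1))) {\<sigma>. \<sigma> \<in> Si \<and> \<sigma> (i+1) = m}
          = sum (\<lambda>\<sigma>. F m) {\<sigma>. \<sigma> \<in> Si \<and> \<sigma> (i+1) = m}" by (rule sum.cong) auto
      also have "\<dots> = card {\<sigma>. \<sigma> \<in> Si \<and> \<sigma> (i+1) = m} * F m" by simp
      also have "card {\<sigma>. \<sigma> \<in> Si \<and> \<sigma> (i+1) = m} = fact (n - 2)"
      proof -
        have "{\<sigma>. \<sigma> \<in> Si \<and> \<sigma> (i+1) = m} = {p. p permutes ?S \<and> p i = j \<and> p (i+1) = m}"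
          by (auto simp: Si_def)
        also have "card \<dots> = fact (card ?S - 2)"
          by (rule card_fix2) (use m iS assms(4) in auto)
        finally show ?thesis by simp
      qed
      finally show "sum (\<lambda>\<sigma>. F (\<sigma> (i+1))) {\<sigma>. \<sigma> \<in> Si \<and> \<sigma> (i+1) = m} = fact (n - 2) * F m"
        by simp
    qed
    finally show ?thesis .
  qed
  have fa: "(fact (n - 1) :: real) = (real n - 1) * fact (n - 2)"
  proof -
    have "n - 1 = Suc (n - 2)" using assms(1) by simp
    hence "(fact (n - 1) :: real) = real (Suc (n - 2)) * fact (n - 2)" by (simp add: fact_Suc)
    also have "real (Suc (n - 2)) = real n - 1" using assms(1) by simp
    finally show ?thesis .
  qed
  have n1: "real n - 1 > 0" using assms(1) by simp
  have "mu n A (i+1) j - mu n A i j = (1 / fact (n - 1)) * (sum (lop_obj n A) Si1 - sum (lop_obj n A) Si)"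
    by (simp add: mu_def Si_def Si1_def right_diff_distrib)
  also have "\<dots> = (1 / fact (n - 1)) * (fact (n - 2) * (\<Sum>m\<in>?S - {j}. F m))"
    using s1 s2 s3 by (simp add: sum_distrib_left)
  also have "\<dots> = (1 / (real n - 1)) * (\<Sum>m\<in>?S - {j}. F m)"
    by (subst fa) (use n1 in \<open>simp add: field_simps\<close>)
  finally show ?thesis by (simp add: F_def)
qed

end
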